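(* Let $f\in\ell^2(V,w)$ with $\|f\|_w=1$ and let $k\ge1$ be an integer. Then at least one of the following holds: (i) $\beta(f)\le8k\,\mathcal R^+(f)$; (ii) $\beta(f)>0$ and there exist $k$ disjointly supported nonzero functions $f_1,\dots,f_k\in\ell^2(V,w)$ such that for all $i$, $\mathcal R^+(f_i)\le256\,k^2\,\mathcal R^+(f)^2/\beta(f)^2$.
   Context: $G=(V,E,w)$ finite undirected, positive edge weights, $w(v)=\sum_{u\sim v}w(u,v)\ge1$, $\mathrm{vol}(S)=\sum_{v\in S}w(v)$, $\|f\|_w^2=\sum_vw(v)f(v)^2$. For disjoint $L,R$ with $L\cup R\ne\emptyset$, $\beta(L,R)=\frac{2w(E(L))+2w(E(R))+w(E(L\cup R,V\setminus(L\cup R)))}{\mathrm{vol}(L\cup R)}$, where $w(E(S))$ is the weight of edges inside $S$ and $w(E(S,T))$ that of edges between disjoint $S,T$. For $t>0$, $L_f(t)=\{v:f(v)\le-t\}$, $R_f(t)=\{v:f(v)\ge t\}$; $\beta(f)=\min\{\beta(L_f(t),R_f(t)):t>0,\ L_f(t)\cup R_f(t)\ne\emptyset\}$. For nonzero $h$, $\mathcal R^+(h)=\sum_{\{u,v\}\in E}w(u,v)(h(u)+h(v))^2/\|h\|_w^2$. Functions are disjointly supported if their supports are pairwise disjoint. *)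

theory Defs
  imports Complex_Main
begin

definition weighted_graph :: "'a set \<Rightarrow> ('a \<Rightarrow> 'a \<Rightarrow> real) \<Rightarrow> bool" where
  "weighted_graph V wt \<longleftrightarrow> finite V
     \<and> (\<forall>u v. wt u v = wt v u)
     \<and> (\<forall>u v. wt u v \<ge> 0)
     \<and> (\<forall>u v. wt u v > 0 \<longrightarrow> u \<in> V \<and> v \<in> V \<and> u \<noteq> v)"

definition edges :: "'a set \<Rightarrow> ('a \<Rightarrow> 'a \<Rightarrow> real) \<Rightarrow> 'a set set" where
  "edges V wt = {{u, v} | u v. u \<in> V \<and> v \<in> V \<and> u \<noteq> v \<and> wt u v > 0}"

definition ew :: "('a \<Rightarrow> 'a \<Rightarrow> real) \<Rightarrow> 'a set \<Rightarrow> real" where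
  "ew wt e = (THE c. \<exists>u v. e = {u, v} \<and> c = wt u v)"

definition deg :: "'a set \<Rightarrow> ('a \<Rightarrow> 'a \<Rightarrow> real) \<Rightarrow> 'a \<Rightarrow> real" where
  "deg V wt v = (\<Sum>u\<in>V. wt u v)"

definition vol :: "'a set \<Rightarrow> ('a \<Rightarrow> 'a \<Rightarrow> real) \<Rightarrow> 'a set \<Rightarrow> real" where
  "vol V wt S = (\<Sum>v\<in>S. deg V wt v)"

definition wnorm2 :: "'a set \<Rightarrow> ('a \<Rightarrow> 'a \<Rightarrow> real) \<Rightarrow> ('a \<Rightarrow> real) \<Rightarrow> real" where
  "wnorm2 V wt f = (\<Sum>v\<in>V. deg V wt v * (f v)\<^sup>2)"

definition wE_in :: "'a set \<Rightarrow> ('a \<Rightarrow> 'a \<Rightarrow> real) \<Rightarrow> 'a set \<Rightarrow> real" where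
  "wE_in V wt S = (\<Sum>e\<in>{e\<in>edges V wt. e \<subseteq> S}. ew wt e)"

definition wE_between :: "'a set \<Rightarrow> ('a \<Rightarrow> 'a \<Rightarrow> real) \<Rightarrow> 'a set \<Rightarrow> 'a set \<Rightarrow> real" where
  "wE_between V wt S T = (\<Sum>e\<in>{e\<in>edges V wt. e \<inter> S \<noteq> {} \<and> e \<inter> T \<noteq> {}}. ew wt e)"

definition beta_LR :: "'a set \<Rightarrow> ('a \<Rightarrow> 'a \<Rightarrow> real) \<Rightarrow> 'a set \<Rightarrow> 'a set \<Rightarrow> real" where
  "beta_LR V wt L R =
     (2 * wE_in V wt L + 2 * wE_in V wt R + wE_between V wt (L \<union> R) (V - (L \<union> R)))
       / vol V wt (L \<union> R)"

definition Lset :: "'a set \<Rightarrow> ('a \<Rightarrow> real) \<Rightarrow> real \<Rightarrow> 'a set" where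
  "Lset V f t = {v\<in>V. f v \<le> - t}"

definition Rset :: "'a set \<Rightarrow> ('a \<Rightarrow> real) \<Rightarrow> real \<Rightarrow> 'a set" where
  "Rset V f t = {v\<in>V. f v \<ge> t}"

definition beta :: "'a set \<Rightarrow> ('a \<Rightarrow> 'a \<Rightarrow> real) \<Rightarrow> ('a \<Rightarrow> real) \<Rightarrow> real" where
  "beta V wt f = Min {beta_LR V wt (Lset V f t) (Rset V f t) | t.
                        t > 0 \<and> Lset V f t \<union> Rset V f t \<noteq> {}}"

definition Rplus :: "'a set \<Rightarrow> ('a \<Rightarrow> 'a \<Rightarrow> real) \<Rightarrow> ('a \<Rightarrow> real) \<Rightarrow> real" where
  "Rplus V wt h = (\<Sum>e\<in>edges V wt. ew wt e * (\<Sum>x\<in>e. h x)\<^sup>2) / wnorm2 V wt h"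

definition supp :: "'a set \<Rightarrow> ('a \<Rightarrow> real) \<Rightarrow> 'a set" where
  "supp V h = {v\<in>V. h v \<noteq> 0}"

end

theory Submission
  imports Defs "HOL-Analysis.Analysis"
begin


lemma edge_obtain:
  assumes "e \<in> edges V wt"
  obtains u v where "e = {u,v}" "u \<in> V" "v \<in> V" "u \<noteq> v" "wt u v > 0"
  using assms unfolding edges_def by blast

lemma ew_pair:
  assumes "weighted_graph V wt"
  shows "ew wt {u,v} = wt u v"
proof -
  have sym: "\<And>a b. wt a b = wt b a" using assms unfolding weighted_graph_def by blast
  show ?thesis unfolding ew_def
  proof (rule the_equality)
    show "\<exists>u' v'. {u, v} = {u', v'} \<and> wt u v = wt u' v'" by blast
  next
    fix c assume "\<exists>u' v'. {u, v} = {u', v'} \<and> c = wt u' v'"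
    then obtain u' v' where "{u,v} = {u',v'}" "c = wt u' v'" by blast
    then show "c = wt u v" using sym by (auto simp: doubleton_eq_iff)
  qed
qed

lemma finite_edges:
  assumes "weighted_graph V wt"
  shows "finite (edges V wt)"
proof -
  have "edges V wt \<subseteq> Pow V" unfolding edges_def by auto
  moreover have "finite V" using assms unfolding weighted_graph_def by blast
  ultimately show ?thesis by (meson finite_Pow_iff finite_subset)
qed

lemma handshake:
  assumes G: "weighted_graph V wt"
  shows "(\<Sum>e\<in>edges V wt. ew wt e * (\<Sum>x\<in>e. F x)) = (\<Sum>v\<in>V. deg V wt v * F v)"
proof -
  have finV: "finite V" and sym: "\<And>a b. wt a b = wt b a" and nn: "\<And>a b. wt a b \<ge> 0"
    and pos: "\<And>a b. wt a b > 0 \<Longrightarrow> a \<in> V \<and> b \<in> V \<and> a \<noteq> b"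
    using G unfolding weighted_graph_def by blast+
  let ?E = "edges V wt"
  let ?P = "Sigma V (\<lambda>x. {u\<in>V. wt x u > 0})"
  have finE: "finite ?E" using finite_edges[OF G] .
  have fine: "\<And>e. e \<in> ?E \<Longrightarrow> finite e" by (auto elim: edge_obtain)
  have bij: "bij_betw (\<lambda>q. ({fst q, snd q}, fst q)) ?P (Sigma ?E (\<lambda>e. e))"
    unfolding bij_betw_def
  proof
    show "inj_on (\<lambda>q. ({fst q, snd q}, fst q)) ?P"
      by (rule inj_onI) (auto simp: doubleton_eq_iff dest: pos)
    show "(\<lambda>q. ({fst q, snd q}, fst q)) ` ?P = Sigma ?E (\<lambda>e. e)"
    proof
      show "(\<lambda>q. ({fst q, snd q}, fst q)) ` ?P \<subseteq> Sigma ?E (\<lambda>e. e)"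
        unfolding edges_def using pos by fastforce
      show "Sigma ?E (\<lambda>e. e) \<subseteq> (\<lambda>q. ({fst q, snd q}, fst q)) ` ?P"
      proof
        fix p assume "p \<in> Sigma ?E (\<lambda>e. e)"
        then obtain e x where p: "p = (e,x)" "e \<in> ?E" "x \<in> e" by auto
        then obtain u v where uv: "e = {u,v}" "u \<in> V" "v \<in> V" "u \<noteq> v" "wt u v > 0"
          by (auto elim: edge_obtain)
        show "p \<in> (\<lambda>q. ({fst q, snd q}, fst q)) ` ?P"
        proof (cases "x = u")
          case True
          then show ?thesis using p uv by (auto intro!: image_eqI[where x="(u,v)"])
        next
          case False
          then have "x = v" using p uv by auto
          then show ?thesis using p uv sym[of u v]
            by (auto intro!: image_eqI[where x="(v,u)"] simp: insert_commute)
        qed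
      qed
    qed
  qed
  have "(\<Sum>e\<in>?E. ew wt e * (\<Sum>x\<in>e. F x)) = (\<Sum>e\<in>?E. \<Sum>x\<in>e. ew wt e * F x)"
    by (simp add: sum_distrib_left)
  also have "\<dots> = (\<Sum>p\<in>Sigma ?E (\<lambda>e. e). ew wt (fst p) * F (snd p))"
    using sum.Sigma[OF finE, of "\<lambda>e. e" "\<lambda>e x. ew wt e * F x"] fine by (simp add: split_def)
  also have "\<dots> = (\<Sum>q\<in>?P. ew wt {fst q, snd q} * F (fst q))"
    using sum.reindex_bij_betw[OF bij, of "\<lambda>p. ew wt (fst p) * F (snd p)"] by simp
  also have "\<dots> = (\<Sum>q\<in>?P. wt (fst q) (snd q) * F (fst q))"
    by (rule sum.cong) (auto simp: ew_pair[OF G])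
  also have "\<dots> = (\<Sum>x\<in>V. \<Sum>u\<in>{u\<in>V. wt x u > 0}. wt x u * F x)"
    using sum.Sigma[OF finV, of "\<lambda>x. {u\<in>V. wt x u > 0}" "\<lambda>x u. wt x u * F x"] finV
    by (simp add: split_def)
  also have "\<dots> = (\<Sum>x\<in>V. \<Sum>u\<in>V. wt x u * F x)"
  proof (rule sum.cong[OF refl])
    fix x assume "x \<in> V"
    show "(\<Sum>u\<in>{u\<in>V. wt x u > 0}. wt x u * F x) = (\<Sum>u\<in>V. wt x u * F x)"
      by (rule sum.mono_neutral_left) (use finV nn in \<open>auto simp: order_le_less\<close>)
  qed
  also have "\<dots> = (\<Sum>v\<in>V. deg V wt v * F v)"
    unfolding deg_def by (simp add: sum_distrib_right sym)
  finally show ?thesis .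
qed

definition ind :: "real \<Rightarrow> real \<Rightarrow> real" where
  "ind t y = (if t \<le> y then 1 else if y \<le> - t then -1 else 0)"

definition num :: "'a set \<Rightarrow> ('a \<Rightarrow> 'a \<Rightarrow> real) \<Rightarrow> 'a set \<Rightarrow> 'a set \<Rightarrow> real" where
  "num V wt L R = 2 * wE_in V wt L + 2 * wE_in V wt R + wE_between V wt (L \<union> R) (V - (L \<union> R))"

lemma ew_edge_pos:
  assumes G: "weighted_graph V wt" and "e \<in> edges V wt"
  shows "ew wt e > 0"
  using assms(2) by (auto elim!: edge_obtain simp: ew_pair[OF G])

lemma sum_edge:
  assumes "e = {u,v}" "u \<noteq> v"
  shows "(\<Sum>x\<in>e. g x) = g u + g v"
  using assms by simp

lemma num_eq:
  assumes G: "weighted_graph V wt" and t: "t > 0"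
  shows "num V wt (Lset V f t) (Rset V f t) = (\<Sum>e\<in>edges V wt. ew wt e * \<bar>\<Sum>x\<in>e. ind t (f x)\<bar>)"
proof -
  let ?E = "edges V wt"
  let ?L = "Lset V f t" and ?R = "Rset V f t"
  have finE: "finite ?E" using finite_edges[OF G] .
  have 1: "wE_in V wt S = (\<Sum>e\<in>?E. ew wt e * (if e \<subseteq> S then 1 else 0))" for S
    unfolding wE_in_def by (simp add: sum.inter_filter[OF finE] if_distrib cong: if_cong)
  have 2: "wE_between V wt S T = (\<Sum>e\<in>?E. ew wt e * (if e \<inter> S \<noteq> {} \<and> e \<inter> T \<noteq> {} then 1 else 0))" for S T
    unfolding wE_between_def by (simp add: sum.inter_filter[OF finE] if_distrib cong: if_cong)
  have key: "2 * (if e \<subseteq> ?L then 1 else 0) + 2 * (if e \<subseteq> ?R then 1 else 0)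
     + (if e \<inter> (?L \<union> ?R) \<noteq> {} \<and> e \<inter> (V - (?L \<union> ?R)) \<noteq> {} then 1 else 0)
     = \<bar>\<Sum>x\<in>e. ind t (f x)\<bar>" if e: "e \<in> ?E" for e
  proof -
    obtain u v where uv: "e = {u,v}" "u \<in> V" "v \<in> V" "u \<noteq> v" using e by (auto elim: edge_obtain)
    have s: "(\<Sum>x\<in>e. ind t (f x)) = ind t (f u) + ind t (f v)" using uv by simp
    have a: "(e \<subseteq> ?L) = (f u \<le> -t \<and> f v \<le> -t)" "(e \<subseteq> ?R) = (f u \<ge> t \<and> f v \<ge> t)"
      using uv unfolding Lset_def Rset_def by auto
    have b: "(e \<inter> (?L \<union> ?R) \<noteq> {} \<and> e \<inter> (V - (?L \<union> ?R)) \<noteq> {}) =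
       (((f u \<le> -t \<or> f u \<ge> t) \<and> \<not>(f v \<le> -t \<or> f v \<ge> t)) \<or> (\<not>(f u \<le> -t \<or> f u \<ge> t) \<and> (f v \<le> -t \<or> f v \<ge> t)))"
      using uv unfolding Lset_def Rset_def by auto
    define p where "p = (t \<le> f u)" 
    define q where "q = (f u \<le> -t)"
    define p' where "p' = (t \<le> f v)"
    define q' where "q' = (f v \<le> -t)"
    have pq: "\<not> (p \<and> q)" "\<not> (p' \<and> q')" using t unfolding p_def q_def p'_def q'_def by auto
    have iu: "ind t (f u) = (if p then 1 else if q then -1 else 0)" unfolding ind_def p_def q_def ..
    have iv: "ind t (f v) = (if p' then 1 else if q' then -1 else 0)" unfolding ind_def p'_def q'_def ..
    show ?thesis unfolding s a b iu iv using pq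
      unfolding p_def[symmetric] q_def[symmetric] p'_def[symmetric] q'_def[symmetric]
      by (cases p; cases q; cases p'; cases q') simp_all
  qed
  have "num V wt ?L ?R = (\<Sum>e\<in>?E. ew wt e * (2 * (if e \<subseteq> ?L then 1 else 0) + 2 * (if e \<subseteq> ?R then 1 else 0)
     + (if e \<inter> (?L \<union> ?R) \<noteq> {} \<and> e \<inter> (V - (?L \<union> ?R)) \<noteq> {} then 1 else 0)))"
    unfolding num_def 1 2 by (simp add: sum.distrib sum_distrib_left algebra_simps)
  also have "\<dots> = (\<Sum>e\<in>?E. ew wt e * \<bar>\<Sum>x\<in>e. ind t (f x)\<bar>)"
    by (rule sum.cong[OF refl]) (simp only: key)
  finally show ?thesis .
qed

lemma vol_eq:
  assumes G: "weighted_graph V wt" and t: "t > 0"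
  shows "vol V wt (Lset V f t \<union> Rset V f t) = (\<Sum>v\<in>V. deg V wt v * \<bar>ind t (f v)\<bar>)"
proof -
  have finV: "finite V" using G unfolding weighted_graph_def by blast
  have "vol V wt (Lset V f t \<union> Rset V f t) = (\<Sum>v\<in>{v\<in>V. f v \<le> -t \<or> f v \<ge> t}. deg V wt v)"
    unfolding vol_def Lset_def Rset_def by (rule sum.cong) auto
  also have "\<dots> = (\<Sum>v\<in>V. if f v \<le> -t \<or> f v \<ge> t then deg V wt v else 0)"
    by (rule sum.inter_filter[OF finV])
  also have "\<dots> = (\<Sum>v\<in>V. deg V wt v * \<bar>ind t (f v)\<bar>)"
    using t by (intro sum.cong) (auto simp: ind_def)
  finally show ?thesis .
qed

lemma vol_pos:
  assumes G: "weighted_graph V wt" and D: "\<forall>v\<in>V. deg V wt v \<ge> 1"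
    and S: "S \<subseteq> V" "S \<noteq> {}"
  shows "vol V wt S > 0"
proof -
  have finV: "finite V" using G unfolding weighted_graph_def by blast
  have "finite S" using S finV finite_subset by blast
  obtain x where "x \<in> S" using S by auto
  have "vol V wt S \<ge> (\<Sum>v\<in>S. 1)" unfolding vol_def
    by (rule sum_mono) (use D S in auto)
  moreover have "(\<Sum>v\<in>S. (1::real)) > 0" using \<open>finite S\<close> S by (simp add: card_gt_0_iff)
  ultimately show ?thesis by linarith
qed

lemma beta_le:
  assumes G: "weighted_graph V wt" and D: "\<forall>v\<in>V. deg V wt v \<ge> 1"
    and t: "t > 0" and ne: "Lset V f t \<union> Rset V f t \<noteq> {}"
  shows "beta V wt f * vol V wt (Lset V f t \<union> Rset V f t) \<le> num V wt (Lset V f t) (Rset V f t)"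
proof -
  have finV: "finite V" using G unfolding weighted_graph_def by blast
  let ?A = "{beta_LR V wt (Lset V f t) (Rset V f t) | t. t > 0 \<and> Lset V f t \<union> Rset V f t \<noteq> {}}"
  have "?A \<subseteq> (\<lambda>p. beta_LR V wt (fst p) (snd p)) ` (Pow V \<times> Pow V)"
  proof
    fix y assume "y \<in> ?A"
    then obtain t where "y = beta_LR V wt (Lset V f t) (Rset V f t)" by blast
    then show "y \<in> (\<lambda>p. beta_LR V wt (fst p) (snd p)) ` (Pow V \<times> Pow V)"
      by (intro image_eqI[where x="(Lset V f t, Rset V f t)"]) (auto simp: Lset_def Rset_def)
  qed
  then have finA: "finite ?A" using finV by (meson finite_Pow_iff finite_SigmaI finite_imageI finite_subset)
  have "beta V wt f \<le> beta_LR V wt (Lset V f t) (Rset V f t)"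
    unfolding beta_def by (rule Min_le[OF finA]) (use t ne in blast)
  moreover have vp: "vol V wt (Lset V f t \<union> Rset V f t) > 0"
    by (rule vol_pos[OF G D _ ne]) (auto simp: Lset_def Rset_def)
  ultimately show ?thesis unfolding beta_LR_def num_def
    by (simp add: pos_le_divide_eq mult.commute)
qed

lemma ind_sign: "\<exists>\<sigma>::real. \<bar>\<sigma>\<bar> = 1 \<and> (\<forall>\<tau>>0. \<sigma> * (ind \<tau> y + ind \<tau> z) \<ge> 0)"
proof (cases "\<bar>y\<bar> \<ge> \<bar>z\<bar>")
  case True
  show ?thesis
  proof (cases "y \<ge> 0")
    case True
    with \<open>\<bar>y\<bar> \<ge> \<bar>z\<bar>\<close> show ?thesis by (intro exI[of _ 1]) (auto simp: ind_def)
  next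
    case False
    with \<open>\<bar>y\<bar> \<ge> \<bar>z\<bar>\<close> show ?thesis by (intro exI[of _ "-1"]) (auto simp: ind_def)
  qed
next
  case False
  show ?thesis
  proof (cases "z \<ge> 0")
    case True
    with False show ?thesis by (intro exI[of _ 1]) (auto simp: ind_def)
  next
    case F2: False
    with False show ?thesis by (intro exI[of _ "-1"]) (auto simp: ind_def)
  qed
qed

lemma abs_sum_same_sign:
  assumes c: "\<And>j. j \<in> J \<Longrightarrow> c j \<ge> 0" and tau: "\<And>j. j \<in> J \<Longrightarrow> \<tau> j > 0"
  shows "\<bar>\<Sum>j\<in>J. c j * (ind (\<tau> j) y + ind (\<tau> j) z)\<bar> = (\<Sum>j\<in>J. c j * \<bar>ind (\<tau> j) y + ind (\<tau> j) z\<bar>)"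
proof -
  obtain \<sigma> where s: "\<bar>\<sigma>\<bar> = 1" "\<And>t. t > 0 \<Longrightarrow> \<sigma> * (ind t y + ind t z) \<ge> 0"
    using ind_sign[of y z] by blast
  have e: "\<sigma> * (ind (\<tau> j) y + ind (\<tau> j) z) = \<bar>ind (\<tau> j) y + ind (\<tau> j) z\<bar>" if "j \<in> J" for j
  proof -
    have "\<bar>\<sigma> * (ind (\<tau> j) y + ind (\<tau> j) z)\<bar> = \<bar>ind (\<tau> j) y + ind (\<tau> j) z\<bar>"
      using s(1) by (simp add: abs_mult)
    then show ?thesis using s(2)[OF tau[OF that]] by simp
  qed
  have "\<bar>\<Sum>j\<in>J. c j * (ind (\<tau> j) y + ind (\<tau> j) z)\<bar> = \<bar>\<sigma> * (\<Sum>j\<in>J. c j * (ind (\<tau> j) y + ind (\<tau> j) z))\<bar>"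
    using s(1) by (simp add: abs_mult)
  also have "\<dots> = \<bar>\<Sum>j\<in>J. c j * \<bar>ind (\<tau> j) y + ind (\<tau> j) z\<bar>\<bar>"
    by (simp add: sum_distrib_left e[symmetric] algebra_simps cong: sum.cong)
  also have "\<dots> = (\<Sum>j\<in>J. c j * \<bar>ind (\<tau> j) y + ind (\<tau> j) z\<bar>)"
    by (rule abs_of_nonneg, rule sum_nonneg) (use c in auto)
  finally show ?thesis .
qed

lemma ind_sgn: "t > 0 \<Longrightarrow> ind t y = sgn y * (if t \<le> \<bar>y\<bar> then 1 else 0)"
  by (auto simp: ind_def sgn_if)

lemma decomp:
  fixes xs :: "real list" and \<Phi> :: "real \<Rightarrow> real"
  assumes sw: "sorted_wrt (<) xs" and posx: "\<forall>x\<in>set xs. x > 0"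
    and mono: "\<And>x y. 0 \<le> x \<Longrightarrow> x \<le> y \<Longrightarrow> \<Phi> x \<le> \<Phi> y" and z: "\<Phi> 0 = 0"
  defines "c \<equiv> \<lambda>j. \<Phi> (xs!j) - (if j = 0 then 0 else \<Phi> (xs!(j-1)))"
  shows "\<And>j. j < length xs \<Longrightarrow> c j \<ge> 0"
    and "y = 0 \<or> \<bar>y\<bar> \<in> set xs \<Longrightarrow> (\<Sum>j<length xs. c j * (if xs!j \<le> \<bar>y\<bar> then 1 else 0)) = \<Phi> \<bar>y\<bar>"
proof -
  fix j assume j: "j < length xs"
  show "c j \<ge> 0"
  proof (cases "j = 0")
    case True
    then show ?thesis using mono[of 0 "xs!0"] posx j z unfolding c_def by (auto simp: less_imp_le)
  next
    case False
    have "xs!(j-1) < xs!j" using sorted_wrt_nth_less[OF sw, of "j-1" j] j False by simp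
    moreover have "xs!(j-1) > 0" using posx j by auto
    ultimately show ?thesis using mono[of "xs!(j-1)" "xs!j"] False unfolding c_def by auto
  qed
next
  assume y: "y = 0 \<or> \<bar>y\<bar> \<in> set xs"
  show "(\<Sum>j<length xs. c j * (if xs!j \<le> \<bar>y\<bar> then 1 else 0)) = \<Phi> \<bar>y\<bar>"
  proof (cases "y = 0")
    case True
    have "xs!j > 0" if "j < length xs" for j using posx that by auto
    then show ?thesis using True z by (simp add: not_le[symmetric])
  next
    case False
    then obtain i where i: "i < length xs" "xs!i = \<bar>y\<bar>" using y by (auto simp: in_set_conv_nth)
    have le: "(xs!j \<le> \<bar>y\<bar>) = (j \<le> i)" if "j < length xs" for j
    proof
      assume "xs!j \<le> \<bar>y\<bar>"
      then show "j \<le> i" using sorted_wrt_nth_less[OF sw, of i j] that i by (metis not_le_imp_less not_less)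
    next
      assume "j \<le> i"
      then show "xs!j \<le> \<bar>y\<bar>" using sorted_wrt_nth_less[OF sw, of j i] that i
        by (metis order.order_iff_strict)
    qed
    have seteq: "{..<length xs} \<inter> {j. j < Suc i} = {..<Suc i}" using i(1) by auto
    have "(\<Sum>j<length xs. c j * (if xs!j \<le> \<bar>y\<bar> then 1 else 0)) = (\<Sum>j<length xs. if j < Suc i then c j else 0)"
      by (rule sum.cong) (auto simp: le)
    also have "\<dots> = (\<Sum>j\<in>{..<length xs} \<inter> {j. j < Suc i}. c j)"
      by (simp add: sum.inter_restrict)
    also have "\<dots> = (\<Sum>j<Suc i. c j)" using seteq by simp
    also have "\<dots> = (\<Sum>j<Suc i. (\<lambda>m. if m = 0 then 0 else \<Phi> (xs!(m-1))) (Suc j) - (\<lambda>m. if m = 0 then 0 else \<Phi> (xs!(m-1))) j)"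
      unfolding c_def by (rule sum.cong) auto
    also have "\<dots> = \<Phi> (xs!i)" by (subst sum_lessThan_telescope) simp
    finally show ?thesis using i by simp
  qed
qed

lemma coarea:
  fixes \<Phi> :: "real \<Rightarrow> real"
  assumes G: "weighted_graph V wt" and D: "\<forall>v\<in>V. deg V wt v \<ge> 1"
    and mono: "\<And>x y. 0 \<le> x \<Longrightarrow> x \<le> y \<Longrightarrow> \<Phi> x \<le> \<Phi> y" and z: "\<Phi> 0 = 0"
  shows "beta V wt f * (\<Sum>v\<in>V. deg V wt v * \<Phi> \<bar>f v\<bar>)
     \<le> (\<Sum>e\<in>edges V wt. ew wt e * \<bar>\<Sum>x\<in>e. sgn (f x) * \<Phi> \<bar>f x\<bar>\<bar>)"
proof -
  have finV: "finite V" using G unfolding weighted_graph_def by blast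
  define X where "X = (\<lambda>v. \<bar>f v\<bar>) ` {v\<in>V. f v \<noteq> 0}"
  have finX: "finite X" unfolding X_def using finV by simp
  define xs where "xs = sorted_list_of_set X"
  have sw: "sorted_wrt (<) xs" unfolding xs_def by simp
  have setxs: "set xs = X" unfolding xs_def using finX by simp
  have posx: "\<forall>x\<in>set xs. x > 0" unfolding setxs X_def by auto
  define n where "n = length xs"
  define c where "c = (\<lambda>j. \<Phi> (xs!j) - (if j = 0 then 0 else \<Phi> (xs!(j-1))))"
  have c0: "\<And>j. j < n \<Longrightarrow> c j \<ge> 0"
    using decomp(1)[where \<Phi>=\<Phi>, OF sw posx mono z] unfolding c_def n_def by blast
  have tpos: "\<And>j. j < n \<Longrightarrow> xs!j > 0" using posx unfolding n_def by auto
  have dec: "(\<Sum>j<n. c j * (if xs!j \<le> \<bar>f v\<bar> then 1 else 0)) = \<Phi> \<bar>f v\<bar>" if "v \<in> V" for v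
  proof -
    have "f v = 0 \<or> \<bar>f v\<bar> \<in> set xs" unfolding setxs X_def using that by auto
    then show ?thesis using decomp(2)[where \<Phi>=\<Phi>, OF sw posx mono z] unfolding c_def n_def by blast
  qed
  have dec1: "\<Phi> \<bar>f v\<bar> = (\<Sum>j<n. c j * \<bar>ind (xs!j) (f v)\<bar>)" if "v \<in> V" for v
  proof -
    have "(\<Sum>j<n. c j * \<bar>ind (xs!j) (f v)\<bar>) = (\<Sum>j<n. c j * (if xs!j \<le> \<bar>f v\<bar> then 1 else 0))"
    proof (rule sum.cong[OF refl])
      fix j assume "j \<in> {..<n}"
      then have "xs!j > 0" using tpos by auto
      then show "c j * \<bar>ind (xs!j) (f v)\<bar> = c j * (if xs!j \<le> \<bar>f v\<bar> then 1 else 0)"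
        by (auto simp: ind_def)
    qed
    then show ?thesis using dec[OF that] by simp
  qed
  have dec2: "sgn (f v) * \<Phi> \<bar>f v\<bar> = (\<Sum>j<n. c j * ind (xs!j) (f v))" if "v \<in> V" for v
  proof -
    have "(\<Sum>j<n. c j * ind (xs!j) (f v)) = sgn (f v) * (\<Sum>j<n. c j * (if xs!j \<le> \<bar>f v\<bar> then 1 else 0))"
      unfolding sum_distrib_left
    proof (rule sum.cong[OF refl])
      fix j assume "j \<in> {..<n}"
      then have "xs!j > 0" using tpos by auto
      then show "c j * ind (xs!j) (f v) = sgn (f v) * (c j * (if xs!j \<le> \<bar>f v\<bar> then 1 else 0))"
        by (simp add: ind_sgn)
    qed
    then show ?thesis using dec[OF that] by simp
  qed
  let ?E = "edges V wt"
  let ?S = "\<lambda>j. Lset V f (xs!j) \<union> Rset V f (xs!j)"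
  have L: "(\<Sum>v\<in>V. deg V wt v * \<Phi> \<bar>f v\<bar>) = (\<Sum>j<n. c j * vol V wt (?S j))"
  proof -
    have "(\<Sum>v\<in>V. deg V wt v * \<Phi> \<bar>f v\<bar>) = (\<Sum>v\<in>V. \<Sum>j<n. c j * (deg V wt v * \<bar>ind (xs!j) (f v)\<bar>))"
      by (rule sum.cong[OF refl]) (simp add: dec1 sum_distrib_left algebra_simps)
    also have "\<dots> = (\<Sum>j<n. c j * (\<Sum>v\<in>V. deg V wt v * \<bar>ind (xs!j) (f v)\<bar>))"
      by (subst sum.swap) (simp add: sum_distrib_left)
    also have "\<dots> = (\<Sum>j<n. c j * vol V wt (?S j))"
      by (rule sum.cong[OF refl]) (simp add: vol_eq[OF G tpos])
    finally show ?thesis .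
  qed
  have R: "(\<Sum>e\<in>?E. ew wt e * \<bar>\<Sum>x\<in>e. sgn (f x) * \<Phi> \<bar>f x\<bar>\<bar>) = (\<Sum>j<n. c j * num V wt (Lset V f (xs!j)) (Rset V f (xs!j)))"
  proof -
    have e1: "\<bar>\<Sum>x\<in>e. sgn (f x) * \<Phi> \<bar>f x\<bar>\<bar> = (\<Sum>j<n. c j * \<bar>\<Sum>x\<in>e. ind (xs!j) (f x)\<bar>)" if eE: "e \<in> ?E" for e
    proof -
      obtain u v where uv: "e = {u,v}" "u \<in> V" "v \<in> V" "u \<noteq> v" using eE by (auto elim: edge_obtain)
      have "(\<Sum>x\<in>e. sgn (f x) * \<Phi> \<bar>f x\<bar>) = (\<Sum>j<n. c j * (ind (xs!j) (f u) + ind (xs!j) (f v)))"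
        using uv by (simp add: dec2 sum.distrib algebra_simps)
      then have "\<bar>\<Sum>x\<in>e. sgn (f x) * \<Phi> \<bar>f x\<bar>\<bar> = (\<Sum>j<n. c j * \<bar>ind (xs!j) (f u) + ind (xs!j) (f v)\<bar>)"
        using abs_sum_same_sign[of "{..<n}" c "\<lambda>j. xs!j" "f u" "f v"] c0 tpos by simp
      then show ?thesis using uv by simp
    qed
    have "(\<Sum>e\<in>?E. ew wt e * \<bar>\<Sum>x\<in>e. sgn (f x) * \<Phi> \<bar>f x\<bar>\<bar>) = (\<Sum>e\<in>?E. \<Sum>j<n. c j * (ew wt e * \<bar>\<Sum>x\<in>e. ind (xs!j) (f x)\<bar>))"
      by (rule sum.cong[OF refl]) (simp add: e1 sum_distrib_left algebra_simps)
    also have "\<dots> = (\<Sum>j<n. c j * (\<Sum>e\<in>?E. ew wt e * \<bar>\<Sum>x\<in>e. ind (xs!j) (f x)\<bar>))"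
      by (subst sum.swap) (simp add: sum_distrib_left)
    also have "\<dots> = (\<Sum>j<n. c j * num V wt (Lset V f (xs!j)) (Rset V f (xs!j)))"
      by (rule sum.cong[OF refl]) (simp add: num_eq[OF G tpos])
    finally show ?thesis .
  qed
  have "beta V wt f * (\<Sum>j<n. c j * vol V wt (?S j)) = (\<Sum>j<n. c j * (beta V wt f * vol V wt (?S j)))"
    by (simp add: sum_distrib_left algebra_simps)
  also have "\<dots> \<le> (\<Sum>j<n. c j * num V wt (Lset V f (xs!j)) (Rset V f (xs!j)))"
  proof (rule sum_mono)
    fix j assume j: "j \<in> {..<n}"
    have "xs!j \<in> X" using j setxs unfolding n_def by (metis lessThan_iff nth_mem)
    then obtain v where v: "v \<in> V" "\<bar>f v\<bar> = xs!j" unfolding X_def by auto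
    then have "v \<in> ?S j" unfolding Lset_def Rset_def by auto
    then have "?S j \<noteq> {}" by blast
    from beta_le[OF G D tpos this] j
    show "c j * (beta V wt f * vol V wt (?S j)) \<le> c j * num V wt (Lset V f (xs!j)) (Rset V f (xs!j))"
      using c0 j by (intro mult_left_mono) auto
  qed
  finally show ?thesis unfolding L R .
qed



definition PhiT :: "real set \<Rightarrow> real \<Rightarrow> real" where
  "PhiT T x = integral {-1..x} (\<lambda>s. infdist s T) - integral {-1..0} (\<lambda>s. infdist s T)"

lemma PhiT_deriv:
  assumes "x > -1"
  shows "(PhiT T has_real_derivative infdist x T) (at x)"
proof -
  have c: "continuous_on {-1..x+1} (\<lambda>s. infdist s T)"
    by (intro continuous_intros)
  have "((\<lambda>y. integral {-1..y} (\<lambda>s. infdist s T)) has_real_derivative infdist x T) (at x within {-1..x+1})"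
    by (rule integral_has_real_derivative[OF c]) (use assms in auto)
  moreover have "at x within {-1..x+1} = at x"
    by (rule at_within_interior) (use assms in auto)
  ultimately have "((\<lambda>y. integral {-1..y} (\<lambda>s. infdist s T)) has_real_derivative infdist x T) (at x)"
    by simp
  then show ?thesis unfolding PhiT_def[abs_def]
    by (rule derivative_eq_intros) auto
qed

lemma PhiT_0: "PhiT T 0 = 0" unfolding PhiT_def by simp

lemma PhiT_mono:
  assumes "0 \<le> x" "x \<le> y"
  shows "PhiT T x \<le> PhiT T y"
  by (rule DERIV_nonneg_imp_nondecreasing[OF assms(2)])
     (use assms in \<open>auto intro!: exI[of _ "infdist _ T"] PhiT_deriv infdist_nonneg\<close>)

lemma PhiT_upper:
  assumes "0 \<le> c" "c \<le> a"
  shows "PhiT T a - PhiT T c \<le> (a - c) * (infdist c T + infdist a T + (a - c)) / 2"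
proof -
  define K where "K = (infdist c T + infdist a T + (a - c)) / 2"
  have "(\<lambda>s. K * s - PhiT T s) c \<le> (\<lambda>s. K * s - PhiT T s) a"
  proof (rule DERIV_nonneg_imp_nondecreasing[OF assms(2)])
    fix s assume s: "c \<le> s" "s \<le> a"
    have d1: "infdist s T \<le> infdist c T + (s - c)" using infdist_triangle[of s T c] s by (simp add: dist_real_def)
    have d2: "infdist s T \<le> infdist a T + (a - s)" using infdist_triangle[of s T a] s by (simp add: dist_real_def)
    have "((\<lambda>s. K * s - PhiT T s) has_real_derivative K - infdist s T) (at s)"
      using PhiT_deriv[of s T] s assms by (auto intro!: derivative_eq_intros)
    moreover have "K - infdist s T \<ge> 0" using d1 d2 unfolding K_def by (simp add: field_simps)
    ultimately show "\<exists>y. ((\<lambda>s. K * s - PhiT T s) has_real_derivative y) (at s) \<and> 0 \<le> y" by blast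
  qed
  then have "PhiT T a - PhiT T c \<le> K * (a - c)" by (simp add: algebra_simps)
  then show ?thesis unfolding K_def by (simp add: mult.commute)
qed

lemma infdist_lower:
  fixes T :: "real set"
  assumes "T \<noteq> {}" "\<And>t. t \<in> T \<Longrightarrow> m \<le> \<bar>s - t\<bar>"
  shows "m \<le> infdist s T"
  unfolding infdist_notempty[OF assms(1)]
  by (rule cINF_greatest) (use assms in \<open>auto simp: dist_real_def\<close>)

lemma PhiT_gap:
  fixes T :: "real set"
  assumes ne: "T \<noteq> {}" and lt: "a < x" and a0: "0 \<le> a"
    and gap: "\<And>t. t \<in> T \<Longrightarrow> t \<le> a \<or> t \<ge> x"
  shows "PhiT T x - PhiT T a \<ge> (x - a)^2 / 4"
proof -
  define m where "m = (a + x) / 2"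
  have dl: "min (s - a) (x - s) \<le> infdist s T" if "a \<le> s" "s \<le> x" for s
    by (rule infdist_lower[OF ne]) (use gap that in fastforce)
  have 1: "(\<lambda>s. PhiT T s - (s - a)^2/2) a \<le> (\<lambda>s. PhiT T s - (s - a)^2/2) m"
  proof (rule DERIV_nonneg_imp_nondecreasing[of a m "\<lambda>s. PhiT T s - (s - a)^2/2"])
    show "a \<le> m" using lt unfolding m_def by simp
    fix s assume s: "a \<le> s" "s \<le> m"
    have "((\<lambda>s. PhiT T s - (s - a)^2/2) has_real_derivative infdist s T - (s - a)) (at s)"
      using PhiT_deriv[of s T] s a0 by (auto intro!: derivative_eq_intros simp: field_simps)
    moreover have "infdist s T - (s - a) \<ge> 0" using dl[of s] s lt unfolding m_def by auto
    ultimately show "\<exists>y. ((\<lambda>s. PhiT T s - (s - a)^2/2) has_real_derivative y) (at s) \<and> 0 \<le> y" by blast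
  qed
  have 2: "(\<lambda>s. PhiT T s + (x - s)^2/2) m \<le> (\<lambda>s. PhiT T s + (x - s)^2/2) x"
  proof (rule DERIV_nonneg_imp_nondecreasing[of m x "\<lambda>s. PhiT T s + (x - s)^2/2"])
    show "m \<le> x" using lt unfolding m_def by simp
    fix s assume s: "m \<le> s" "s \<le> x"
    have "((\<lambda>s. PhiT T s + (x - s)^2/2) has_real_derivative infdist s T - (x - s)) (at s)"
      using PhiT_deriv[of s T] s a0 lt unfolding m_def by (auto intro!: derivative_eq_intros simp: field_simps)
    moreover have "infdist s T - (x - s) \<ge> 0" using dl[of s] s lt unfolding m_def by auto
    ultimately show "\<exists>y. ((\<lambda>s. PhiT T s + (x - s)^2/2) has_real_derivative y) (at s) \<and> 0 \<le> y" by blast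
  qed
  have "(m - a)^2 = (x - a)^2/4" "(x - m)^2 = (x - a)^2/4" unfolding m_def by (simp_all add: power2_eq_square field_simps)
  then show ?thesis using 1 2 by simp
qed

lemma PhiT_lower:
  fixes T :: "real set"
  assumes finT: "finite T" and T0: "0 \<in> T"
  shows "x > 0 \<Longrightarrow> PhiT T x \<ge> x^2 / (4 * card {t\<in>T. t < x})"
proof (induction "card {t\<in>T. t < x}" arbitrary: x)
  case 0
  have "card {t\<in>T. t < x} > 0" using T0 \<open>0 < x\<close> finT by (auto simp: card_gt_0_iff)
  then show ?case using 0(1) by simp
next
  case (Suc n)
  let ?A = "{t\<in>T. t < x}"
  have finA: "finite ?A" using finT by simp
  have neA: "?A \<noteq> {}" using T0 Suc.prems by auto
  define a where "a = Max ?A"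
  have aA: "a \<in> ?A" unfolding a_def using Max_in[OF finA neA] .
  have a0: "a \<ge> 0" unfolding a_def using Max_ge[OF finA, of 0] T0 Suc.prems by auto
  have gap: "t \<le> a \<or> t \<ge> x" if "t \<in> T" for t
    using Max_ge[OF finA, of t] that unfolding a_def by force
  have g: "PhiT T x - PhiT T a \<ge> (x - a)^2/4"
    by (rule PhiT_gap) (use T0 aA a0 gap in auto)
  show ?case
  proof (cases "a = 0")
    case True
    have c1: "real (card ?A) \<ge> 1" using neA finA by (simp add: card_gt_0_iff Suc_le_eq)
    have "x^2 / (4 * card ?A) \<le> x^2 / 4"
      by (rule divide_left_mono) (use c1 in auto)
    moreover have "x^2/4 \<le> PhiT T x" using g True PhiT_0[of T] by simp
    ultimately show ?thesis by linarith
  next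
    case False
    then have apos: "a > 0" using a0 by simp
    have eqA: "?A = insert a {t\<in>T. t < a}" using aA gap by force
    have "card ?A = Suc (card {t\<in>T. t < a})" unfolding eqA
      by (subst card_insert_disjoint) (use finT in auto)
    then have cn: "n = card {t\<in>T. t < a}" using Suc.hyps(2) by simp
    have IH: "PhiT T a \<ge> a^2 / (4 * n)" using Suc.hyps(1)[OF cn apos] cn by simp
    have "0 \<in> {t\<in>T. t < a}" using T0 apos by simp
    then have "card {t\<in>T. t < a} > 0" using finT by (auto simp: card_gt_0_iff)
    then have n1: "n \<ge> 1" using cn by simp
    define y where "y = x - a"
    have key: "(a + y)^2 / (4 * (n + 1)) \<le> a^2/(4*n) + y^2/4"
    proof -
      have rn: "real n \<ge> 1" using n1 by simp
      have "(a + y)^2 * n \<le> (a^2 + n * y^2) * (n + 1)"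
      proof -
        have "0 \<le> (a - n*y)^2" by simp
        then show ?thesis by (simp add: power2_eq_square algebra_simps)
      qed
      then show ?thesis using rn by (simp add: field_simps)
    qed
    have "x^2 / (4 * card ?A) = (a + y)^2 / (4 * (n + 1))" unfolding y_def using Suc.hyps(2) by simp
    then show ?thesis using key IH g unfolding y_def by linarith
  qed
qed

lemma PhiT_nonneg: "0 \<le> x \<Longrightarrow> PhiT T x \<ge> 0"
  using PhiT_mono[of 0 x T] PhiT_0[of T] by simp

lemma PhiT_absdiff:
  assumes "0 \<le> a" "0 \<le> c"
  shows "\<bar>PhiT T a - PhiT T c\<bar> \<le> \<bar>a - c\<bar> * (infdist a T + infdist c T + \<bar>a - c\<bar>) / 2"
proof (cases "c \<le> a")
  case True
  have "PhiT T a - PhiT T c \<le> (a - c) * (infdist c T + infdist a T + (a - c)) / 2"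
    using PhiT_upper[OF assms(2) True] .
  moreover have "PhiT T c \<le> PhiT T a" using PhiT_mono[OF assms(2) True] .
  ultimately show ?thesis using True by (simp add: algebra_simps)
next
  case False
  then have ca: "a \<le> c" by simp
  have "PhiT T c - PhiT T a \<le> (c - a) * (infdist a T + infdist c T + (c - a)) / 2"
    using PhiT_upper[OF assms(1) ca] .
  moreover have "PhiT T a \<le> PhiT T c" using PhiT_mono[OF assms(1) ca] .
  ultimately show ?thesis using ca by (simp add: algebra_simps abs_if)
qed

lemma edge_bound:
  fixes T :: "real set"
  assumes T0: "0 \<in> T"
  shows "\<bar>sgn y * PhiT T \<bar>y\<bar> + sgn z * PhiT T \<bar>z\<bar>\<bar>
     \<le> ((y + z)^2 + \<bar>y + z\<bar> * (infdist \<bar>y\<bar> T + infdist \<bar>z\<bar> T)) / 2"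
proof -
  let ?d = "\<lambda>x. infdist x T"
  have d0: "?d 0 = 0" using T0 by simp
  have dn: "\<And>x. ?d x \<ge> 0" by (rule infdist_nonneg)
  have one: "PhiT T a \<le> a * (?d a + a) / 2" if "a \<ge> 0" for a
    using PhiT_absdiff[OF that, of 0 T] that d0 PhiT_0[of T] by simp
  have same: "PhiT T a + PhiT T b \<le> ((a + b)^2 + (a + b) * (?d a + ?d b)) / 2" if "a \<ge> 0" "b \<ge> 0" for a b
  proof -
    have "a * ?d a + b * ?d b \<le> (a + b) * (?d a + ?d b)"
      using that dn[of a] dn[of b] by (simp add: algebra_simps)
    moreover have "a^2 + b^2 \<le> (a+b)^2" using that by (simp add: power2_eq_square algebra_simps)
    ultimately show ?thesis using one[OF that(1)] one[OF that(2)] by (simp add: power2_eq_square algebra_simps)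
  qed
  show ?thesis
  proof (cases "y \<ge> 0")
    case y: True
    show ?thesis
    proof (cases "z \<ge> 0")
      case z: True
      have "\<bar>sgn y * PhiT T \<bar>y\<bar> + sgn z * PhiT T \<bar>z\<bar>\<bar> \<le> PhiT T y + PhiT T z"
        using y z PhiT_nonneg[of y T] PhiT_nonneg[of z T] PhiT_0[of T]
        by (cases "y = 0"; cases "z = 0") (auto simp: sgn_if)
      then show ?thesis using same[OF y z] y z by simp
    next
      case z: False
      have "\<bar>sgn y * PhiT T \<bar>y\<bar> + sgn z * PhiT T \<bar>z\<bar>\<bar> = \<bar>PhiT T y - PhiT T (-z)\<bar>"
        using y z PhiT_0[of T] by (cases "y = 0") (auto simp: sgn_if)
      also have "\<dots> \<le> \<bar>y - (-z)\<bar> * (?d y + ?d (-z) + \<bar>y - (-z)\<bar>) / 2"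
        using PhiT_absdiff[of y "-z" T] y z by simp
      finally show ?thesis using y z by (simp add: power2_eq_square algebra_simps)
    qed
  next
    case y: False
    show ?thesis
    proof (cases "z \<ge> 0")
      case z: True
      have "\<bar>sgn y * PhiT T \<bar>y\<bar> + sgn z * PhiT T \<bar>z\<bar>\<bar> = \<bar>PhiT T z - PhiT T (-y)\<bar>"
        using y z PhiT_0[of T] by (cases "z = 0") (auto simp: sgn_if)
      also have "\<dots> \<le> \<bar>z - (-y)\<bar> * (?d z + ?d (-y) + \<bar>z - (-y)\<bar>) / 2"
        using PhiT_absdiff[of z "-y" T] y z by simp
      finally show ?thesis using y z by (simp add: power2_eq_square algebra_simps)
    next
      case z: False
      have "\<bar>sgn y * PhiT T \<bar>y\<bar> + sgn z * PhiT T \<bar>z\<bar>\<bar> = PhiT T (-y) + PhiT T (-z)"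
        using y z PhiT_nonneg[of "-y" T] PhiT_nonneg[of "-z" T] by (auto simp: sgn_if)
      also have "\<dots> \<le> (((-y) + (-z))^2 + ((-y) + (-z)) * (?d (-y) + ?d (-z))) / 2"
        using same[of "-y" "-z"] y z by simp
      finally show ?thesis using y z by (simp add: power2_eq_square algebra_simps)
    qed
  qed
qed


lemma ew_nonneg: "weighted_graph V wt \<Longrightarrow> e \<in> edges V wt \<Longrightarrow> ew wt e \<ge> 0"
  using ew_edge_pos[of V wt e] by simp

lemma Rplus_eq:
  assumes "wnorm2 V wt f = 1"
  shows "Rplus V wt f = (\<Sum>e\<in>edges V wt. ew wt e * (\<Sum>x\<in>e. f x)\<^sup>2)"
  using assms unfolding Rplus_def by simp



lemma rounding:
  fixes T :: "real set"
  assumes G: "weighted_graph V wt" and D: "\<forall>v\<in>V. deg V wt v \<ge> 1"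
    and N1: "wnorm2 V wt f = 1" and finT: "finite T" and T0: "0 \<in> T"
  shows "beta V wt f \<le> 2 * card T * (Rplus V wt f
           + sqrt (2 * Rplus V wt f * (\<Sum>v\<in>V. deg V wt v * (infdist \<bar>f v\<bar> T)\<^sup>2)))"
proof -
  let ?E = "edges V wt"
  let ?R = "Rplus V wt f"
  let ?d = "\<lambda>x. infdist \<bar>f x\<bar> T"
  let ?\<delta> = "\<Sum>v\<in>V. deg V wt v * (?d v)\<^sup>2"
  define N where "N = real (card T)"
  have finV: "finite V" using G unfolding weighted_graph_def by blast
  have N1': "N \<ge> 1" unfolding N_def using finT T0 by (auto simp: card_gt_0_iff Suc_le_eq)
  have degnn: "\<And>v. v \<in> V \<Longrightarrow> deg V wt v \<ge> 0" using D by force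
  have R: "?R = (\<Sum>e\<in>?E. ew wt e * (\<Sum>x\<in>e. f x)\<^sup>2)" by (rule Rplus_eq[OF N1])
  have R0: "?R \<ge> 0" unfolding R by (intro sum_nonneg mult_nonneg_nonneg ew_nonneg[OF G]) auto
  have dl0: "?\<delta> \<ge> 0" by (intro sum_nonneg mult_nonneg_nonneg degnn) auto
  have CA: "beta V wt f * (\<Sum>v\<in>V. deg V wt v * PhiT T \<bar>f v\<bar>)
     \<le> (\<Sum>e\<in>?E. ew wt e * \<bar>\<Sum>x\<in>e. sgn (f x) * PhiT T \<bar>f x\<bar>\<bar>)"
    by (rule coarea[OF G D]) (auto intro: PhiT_mono PhiT_0)
  have Lb: "(\<Sum>v\<in>V. deg V wt v * PhiT T \<bar>f v\<bar>) \<ge> 1 / (4 * N)"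
  proof -
    have pw: "PhiT T \<bar>y\<bar> \<ge> y\<^sup>2 / (4 * N)" for y
    proof (cases "y = 0")
      case True then show ?thesis by (simp add: PhiT_0)
    next
      case False
      then have yp: "\<bar>y\<bar> > 0" by simp
      have c: "card {t\<in>T. t < \<bar>y\<bar>} \<le> card T" using finT by (intro card_mono) auto
      have "0 \<in> {t\<in>T. t < \<bar>y\<bar>}" using T0 yp by simp
      then have ne: "{t\<in>T. t < \<bar>y\<bar>} \<noteq> {}" by blast
      have c1: "card {t\<in>T. t < \<bar>y\<bar>} \<ge> 1" using ne finT by (simp add: card_gt_0_iff Suc_le_eq)
      have "y\<^sup>2 / (4 * N) \<le> \<bar>y\<bar>\<^sup>2 / (4 * card {t\<in>T. t < \<bar>y\<bar>})"
      proof -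
        have "real (4 * card {t\<in>T. t < \<bar>y\<bar>}) \<le> 4 * real (card T)" using c by simp
        moreover have "real (4 * card {t\<in>T. t < \<bar>y\<bar>}) > 0" using c1 by simp
        ultimately show ?thesis unfolding N_def by (simp add: divide_left_mono)
      qed
      also have "\<dots> \<le> PhiT T \<bar>y\<bar>" by (rule PhiT_lower[OF finT T0 yp])
      finally show ?thesis .
    qed
    have "1 / (4 * N) = (\<Sum>v\<in>V. deg V wt v * (f v)\<^sup>2) / (4 * N)"
      using N1 unfolding wnorm2_def by simp
    also have "\<dots> = (\<Sum>v\<in>V. deg V wt v * (f v)\<^sup>2 / (4 * N))"
      by (rule sum_divide_distrib)
    also have "\<dots> \<le> (\<Sum>v\<in>V. deg V wt v * PhiT T \<bar>f v\<bar>)"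
    proof (rule sum_mono)
      fix v assume "v \<in> V"
      then have "deg V wt v * ((f v)\<^sup>2 / (4 * N)) \<le> deg V wt v * PhiT T \<bar>f v\<bar>"
        by (intro mult_left_mono[OF pw degnn])
      then show "deg V wt v * (f v)\<^sup>2 / (4 * N) \<le> deg V wt v * PhiT T \<bar>f v\<bar>"
        by simp
    qed
    finally show ?thesis .
  qed
  define X where "X = (\<Sum>e\<in>?E. ew wt e * (\<bar>\<Sum>x\<in>e. f x\<bar> * (\<Sum>x\<in>e. ?d x)))"
  define Y where "Y = (\<Sum>e\<in>?E. ew wt e * (\<Sum>x\<in>e. ?d x)\<^sup>2)"
  have Ub: "(\<Sum>e\<in>?E. ew wt e * \<bar>\<Sum>x\<in>e. sgn (f x) * PhiT T \<bar>f x\<bar>\<bar>) \<le> (?R + X) / 2"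
  proof -
    have "(\<Sum>e\<in>?E. ew wt e * \<bar>\<Sum>x\<in>e. sgn (f x) * PhiT T \<bar>f x\<bar>\<bar>)
       \<le> (\<Sum>e\<in>?E. ew wt e * (((\<Sum>x\<in>e. f x)\<^sup>2 + \<bar>\<Sum>x\<in>e. f x\<bar> * (\<Sum>x\<in>e. ?d x)) / 2))"
    proof (rule sum_mono)
      fix e assume eE: "e \<in> ?E"
      obtain u v where uv: "e = {u,v}" "u \<noteq> v" using eE by (auto elim: edge_obtain)
      have "\<bar>\<Sum>x\<in>e. sgn (f x) * PhiT T \<bar>f x\<bar>\<bar> \<le> (((\<Sum>x\<in>e. f x)\<^sup>2 + \<bar>\<Sum>x\<in>e. f x\<bar> * (\<Sum>x\<in>e. ?d x)) / 2)"
        using edge_bound[OF T0, of "f u" "f v"] uv by simp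
      then show "ew wt e * \<bar>\<Sum>x\<in>e. sgn (f x) * PhiT T \<bar>f x\<bar>\<bar> \<le> ew wt e * (((\<Sum>x\<in>e. f x)\<^sup>2 + \<bar>\<Sum>x\<in>e. f x\<bar> * (\<Sum>x\<in>e. ?d x)) / 2)"
        using ew_nonneg[OF G eE] by (rule mult_left_mono)
    qed
    also have "\<dots> = (\<Sum>e\<in>?E. (ew wt e * (\<Sum>x\<in>e. f x)\<^sup>2 + ew wt e * (\<bar>\<Sum>x\<in>e. f x\<bar> * (\<Sum>x\<in>e. ?d x))) / 2)"
      by (rule sum.cong[OF refl]) (simp add: distrib_left add_divide_distrib)
    also have "\<dots> = (?R + X) / 2"
      unfolding R X_def by (simp add: sum_divide_distrib[symmetric] sum.distrib)
    finally show ?thesis .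
  qed
  have X0: "X \<ge> 0" unfolding X_def
    by (intro sum_nonneg mult_nonneg_nonneg ew_nonneg[OF G] sum_nonneg infdist_nonneg) auto
  have XY: "X \<le> sqrt (?R * Y)"
  proof -
    have "X = (\<Sum>e\<in>?E. (sqrt (ew wt e) * \<bar>\<Sum>x\<in>e. f x\<bar>) * (sqrt (ew wt e) * (\<Sum>x\<in>e. ?d x)))"
      unfolding X_def
    proof (rule sum.cong[OF refl])
      fix e assume "e \<in> ?E"
      then have "sqrt (ew wt e) * sqrt (ew wt e) = ew wt e" using ew_nonneg[OF G] by simp
      then show "ew wt e * (\<bar>\<Sum>x\<in>e. f x\<bar> * (\<Sum>x\<in>e. ?d x)) = (sqrt (ew wt e) * \<bar>\<Sum>x\<in>e. f x\<bar>) * (sqrt (ew wt e) * (\<Sum>x\<in>e. ?d x))"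
      proof -
        have "(sqrt (ew wt e) * \<bar>\<Sum>x\<in>e. f x\<bar>) * (sqrt (ew wt e) * (\<Sum>x\<in>e. ?d x))
             = (sqrt (ew wt e) * sqrt (ew wt e)) * (\<bar>\<Sum>x\<in>e. f x\<bar> * (\<Sum>x\<in>e. ?d x))" by algebra
        then show ?thesis using \<open>sqrt (ew wt e) * sqrt (ew wt e) = ew wt e\<close> by simp
      qed
    qed
    then have "X\<^sup>2 \<le> (\<Sum>e\<in>?E. (sqrt (ew wt e) * \<bar>\<Sum>x\<in>e. f x\<bar>)\<^sup>2) * (\<Sum>e\<in>?E. (sqrt (ew wt e) * (\<Sum>x\<in>e. ?d x))\<^sup>2)"
      by (simp only:) (rule Cauchy_Schwarz_ineq_sum)
    also have "\<dots> = ?R * Y" unfolding R Y_def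
      by (intro arg_cong2[where f="(*)"] sum.cong refl) (auto simp: power_mult_distrib ew_nonneg[OF G])
    finally show ?thesis by (rule real_le_rsqrt)
  qed
  have Y2: "Y \<le> 2 * ?\<delta>"
  proof -
    have "Y \<le> (\<Sum>e\<in>?E. ew wt e * (2 * (\<Sum>x\<in>e. (?d x)\<^sup>2)))" unfolding Y_def
    proof (rule sum_mono)
      fix e assume eE: "e \<in> ?E"
      obtain u v where uv: "e = {u,v}" "u \<noteq> v" using eE by (auto elim: edge_obtain)
      have "(?d u + ?d v)\<^sup>2 \<le> 2 * ((?d u)\<^sup>2 + (?d v)\<^sup>2)"
        using sum_squares_bound[of "?d u" "?d v"] by (simp add: power2_eq_square algebra_simps)
      then show "ew wt e * (\<Sum>x\<in>e. ?d x)\<^sup>2 \<le> ew wt e * (2 * (\<Sum>x\<in>e. (?d x)\<^sup>2))"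
        using uv ew_nonneg[OF G eE] by (simp add: mult_left_mono)
    qed
    also have "\<dots> = (\<Sum>e\<in>?E. 2 * (ew wt e * (\<Sum>x\<in>e. (?d x)\<^sup>2)))"
      by (rule sum.cong[OF refl]) (rule mult.left_commute)
    also have "\<dots> = 2 * (\<Sum>e\<in>?E. ew wt e * (\<Sum>x\<in>e. (?d x)\<^sup>2))"
      by (rule sum_distrib_left[symmetric])
    also have "\<dots> = 2 * ?\<delta>"
      by (simp only: handshake[OF G, of "\<lambda>x. (?d x)\<^sup>2"])
    finally show ?thesis .
  qed
  have "sqrt (?R * Y) \<le> sqrt (2 * ?R * ?\<delta>)"
  proof -
    have "?R * Y \<le> ?R * (2 * ?\<delta>)" using Y2 R0 by (rule mult_left_mono)
    then show ?thesis by (simp add: mult.assoc mult.left_commute)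
  qed
  then have main: "beta V wt f * (\<Sum>v\<in>V. deg V wt v * PhiT T \<bar>f v\<bar>) \<le> (?R + sqrt (2 * ?R * ?\<delta>)) / 2"
  proof -
    have "X \<le> sqrt (2 * ?R * ?\<delta>)" using XY \<open>sqrt (?R * Y) \<le> sqrt (2 * ?R * ?\<delta>)\<close> by (rule order.trans)
    then have "(?R + X) / 2 \<le> (?R + sqrt (2 * ?R * ?\<delta>)) / 2" by (simp add: divide_right_mono)
    then show ?thesis using CA Ub by (meson order.trans)
  qed
  show ?thesis
  proof (cases "beta V wt f \<le> 0")
    case True
    have "0 \<le> 2 * card T * (?R + sqrt (2 * ?R * ?\<delta>))" using R0 dl0 by simp
    then show ?thesis using True by linarith
  next
    case False
    then have "beta V wt f / (4 * N) \<le> beta V wt f * (\<Sum>v\<in>V. deg V wt v * PhiT T \<bar>f v\<bar>)"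
      using Lb mult_left_mono[OF Lb, of "beta V wt f"] by simp
    then have "beta V wt f / (4 * N) \<le> (?R + sqrt (2 * ?R * ?\<delta>)) / 2" using main by linarith
    then show ?thesis using N1' unfolding N_def by (simp add: field_simps)
  qed
qed


definition tent :: "real \<Rightarrow> real \<Rightarrow> real \<Rightarrow> real" where
  "tent a b x = max 0 (min (x - a) (b - x))"

lemma tent_nonneg: "tent a b x \<ge> 0" unfolding tent_def by simp

lemma tent_zero: "0 \<le> a \<Longrightarrow> tent a b 0 = 0" unfolding tent_def by simp

lemma tent_clamp:
  assumes "\<alpha> \<le> \<beta>"
  shows "\<bar>tent \<alpha> \<beta> a - tent \<alpha> \<beta> c\<bar> \<le> max (min a c) (min (max a c) \<beta>) - max (min a c) (min (max a c) \<alpha>)"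
  using assms unfolding tent_def by (auto simp: max_def min_def split: if_splits)

lemma tent_sum_diff:
  assumes mono: "\<forall>i<p. t i \<le> t (Suc i)"
  shows "(\<Sum>i<p. \<bar>tent (t i) (t (Suc i)) a - tent (t i) (t (Suc i)) c\<bar>) \<le> \<bar>a - c\<bar>"
proof -
  define cl where "cl = (\<lambda>x. max (min a c) (min (max a c) x))"
  have "(\<Sum>i<p. \<bar>tent (t i) (t (Suc i)) a - tent (t i) (t (Suc i)) c\<bar>) \<le> (\<Sum>i<p. cl (t (Suc i)) - cl (t i))"
    by (rule sum_mono) (use mono tent_clamp in \<open>auto simp: cl_def\<close>)
  also have "\<dots> = cl (t p) - cl (t 0)" by (rule sum_lessThan_telescope)
  also have "\<dots> \<le> \<bar>a - c\<bar>" unfolding cl_def by (auto simp: max_def min_def)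
  finally show ?thesis .
qed

lemma tent_edge:
  assumes mono: "\<forall>i<p. t i \<le> t (Suc i)" and t0: "t 0 \<ge> 0"
  shows "(\<Sum>i<p. \<bar>sgn y * tent (t i) (t (Suc i)) \<bar>y\<bar> + sgn z * tent (t i) (t (Suc i)) \<bar>z\<bar>\<bar>) \<le> \<bar>y + z\<bar>"
proof -
  have tpos: "t i \<ge> 0" if "i \<le> p" for i
    using that
  proof (induction i)
    case 0 then show ?case using t0 by simp
  next
    case (Suc i) then show ?case using mono by (metis Suc_le_lessD less_imp_le_nat order.trans)
  qed
  let ?T = "\<lambda>i x. tent (t i) (t (Suc i)) x"
  have T0: "?T i 0 = 0" if "i < p" for i using tpos[of i] that by (simp add: tent_zero)
  show ?thesis
  proof (cases "(y \<ge> 0 \<and> z \<ge> 0) \<or> (y \<le> 0 \<and> z \<le> 0)")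
    case True
    have "(\<Sum>i<p. \<bar>sgn y * ?T i \<bar>y\<bar> + sgn z * ?T i \<bar>z\<bar>\<bar>)
        \<le> (\<Sum>i<p. \<bar>?T i \<bar>y\<bar> - ?T i 0\<bar> + \<bar>?T i \<bar>z\<bar> - ?T i 0\<bar>)"
    proof (rule sum_mono)
      fix i assume "i \<in> {..<p}"
      then have "?T i 0 = 0" using T0 by simp
      moreover have "\<bar>sgn y * ?T i \<bar>y\<bar> + sgn z * ?T i \<bar>z\<bar>\<bar> \<le> ?T i \<bar>y\<bar> + ?T i \<bar>z\<bar>"
        using tent_nonneg[of "t i" "t (Suc i)" "\<bar>y\<bar>"] tent_nonneg[of "t i" "t (Suc i)" "\<bar>z\<bar>"]
        by (auto simp: sgn_if abs_if)
      ultimately show "\<bar>sgn y * ?T i \<bar>y\<bar> + sgn z * ?T i \<bar>z\<bar>\<bar> \<le> \<bar>?T i \<bar>y\<bar> - ?T i 0\<bar> + \<bar>?T i \<bar>z\<bar> - ?T i 0\<bar>"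
        using tent_nonneg[of "t i" "t (Suc i)" "\<bar>y\<bar>"] tent_nonneg[of "t i" "t (Suc i)" "\<bar>z\<bar>"] by simp
    qed
    also have "\<dots> = (\<Sum>i<p. \<bar>?T i \<bar>y\<bar> - ?T i 0\<bar>) + (\<Sum>i<p. \<bar>?T i \<bar>z\<bar> - ?T i 0\<bar>)"
      by (rule sum.distrib)
    also have "\<dots> \<le> \<bar>\<bar>y\<bar> - 0\<bar> + \<bar>\<bar>z\<bar> - 0\<bar>"
      by (intro add_mono tent_sum_diff[OF mono])
    also have "\<dots> = \<bar>y + z\<bar>" using True by auto
    finally show ?thesis .
  next
    case False
    have "(\<Sum>i<p. \<bar>sgn y * ?T i \<bar>y\<bar> + sgn z * ?T i \<bar>z\<bar>\<bar>) = (\<Sum>i<p. \<bar>?T i \<bar>y\<bar> - ?T i \<bar>z\<bar>\<bar>)"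
      using False by (intro sum.cong refl) (auto simp: sgn_if abs_minus_commute)
    also have "\<dots> \<le> \<bar>\<bar>y\<bar> - \<bar>z\<bar>\<bar>" by (rule tent_sum_diff[OF mono])
    also have "\<dots> = \<bar>y + z\<bar>" using False by auto
    finally show ?thesis .
  qed
qed

lemma sum_sq_le_sq_sum:
  fixes x :: "nat \<Rightarrow> real"
  assumes "\<And>i. i \<in> I \<Longrightarrow> x i \<ge> 0" "finite I"
  shows "(\<Sum>i\<in>I. (x i)\<^sup>2) \<le> (\<Sum>i\<in>I. x i)\<^sup>2"
proof -
  have "(\<Sum>i\<in>I. (x i)\<^sup>2) \<le> (\<Sum>i\<in>I. x i * (\<Sum>j\<in>I. x j))"
  proof (rule sum_mono)
    fix i assume i: "i \<in> I"
    have "x i \<le> (\<Sum>j\<in>I. x j)" by (rule member_le_sum) (use assms i in auto)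
    then show "(x i)\<^sup>2 \<le> x i * (\<Sum>j\<in>I. x j)" using assms(1)[OF i]
      by (simp add: power2_eq_square mult_left_mono)
  qed
  also have "\<dots> = (\<Sum>i\<in>I. x i)\<^sup>2" by (simp add: power2_eq_square sum_distrib_right)
  finally show ?thesis .
qed


definition mass :: "'a set \<Rightarrow> ('a \<Rightarrow> 'a \<Rightarrow> real) \<Rightarrow> ('a \<Rightarrow> real) \<Rightarrow> real \<Rightarrow> real \<Rightarrow> real" where
  "mass V wt f a b = (\<Sum>v\<in>V. deg V wt v * (tent a b \<bar>f v\<bar>)\<^sup>2)"

lemma tent_claim:
  assumes G: "weighted_graph V wt" and D: "\<forall>v\<in>V. deg V wt v \<ge> 1" and mu: "\<mu> > 0"
  shows "a \<ge> 0 \<Longrightarrow> (\<exists>t::nat\<Rightarrow>real. t 0 = a \<and> (\<forall>i<n. t i < t (Suc i) \<and> mass V wt f (t i) (t (Suc i)) = \<mu>))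
     \<or> (\<exists>T. finite T \<and> a \<in> T \<and> card T \<le> n \<and> (\<forall>x\<in>T. x \<ge> a) \<and>
            (\<Sum>v\<in>V. deg V wt v * (if \<bar>f v\<bar> \<ge> a then (infdist \<bar>f v\<bar> T)\<^sup>2 else 0)) \<le> n * \<mu>)"
proof (induction n arbitrary: a)
  case 0
  show ?case by (intro disjI1 exI[of _ "\<lambda>_. a"]) simp
next
  case (Suc n)
  have finV: "finite V" using G unfolding weighted_graph_def by blast
  have degnn: "\<And>v. v \<in> V \<Longrightarrow> deg V wt v \<ge> 0" using D by force
  define B where "B = (\<Sum>v\<in>V. \<bar>f v\<bar>)"
  have fB: "\<bar>f v\<bar> \<le> B" if "v \<in> V" for v
    unfolding B_def by (rule member_le_sum) (use that finV in auto)
  define t' where "t' = a + 2 * B + 1"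
  have B0: "B \<ge> 0" unfolding B_def by (simp add: sum_nonneg)
  have at': "a \<le> t'" unfolding t'_def using B0 by simp
  show ?case
  proof (cases "mass V wt f a t' < \<mu>")
    case True
    have "(\<Sum>v\<in>V. deg V wt v * (if \<bar>f v\<bar> \<ge> a then (infdist \<bar>f v\<bar> {a})\<^sup>2 else 0)) \<le> mass V wt f a t'"
      unfolding mass_def
    proof (rule sum_mono)
      fix v assume v: "v \<in> V"
      have "(if \<bar>f v\<bar> \<ge> a then (infdist \<bar>f v\<bar> {a})\<^sup>2 else 0) \<le> (tent a t' \<bar>f v\<bar>)\<^sup>2"
      proof (cases "\<bar>f v\<bar> \<ge> a")
        case True
        have "tent a t' \<bar>f v\<bar> = \<bar>f v\<bar> - a" unfolding tent_def t'_def using True fB[OF v] Suc.prems by auto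
        then show ?thesis using True by (simp add: dist_real_def)
      qed simp
      then show "deg V wt v * (if \<bar>f v\<bar> \<ge> a then (infdist \<bar>f v\<bar> {a})\<^sup>2 else 0) \<le> deg V wt v * (tent a t' \<bar>f v\<bar>)\<^sup>2"
        using degnn[OF v] by (rule mult_left_mono)
    qed
    also have "\<dots> \<le> Suc n * \<mu>"
    proof -
      have "\<mu> \<le> real (Suc n) * \<mu>" using mu by simp
      then show ?thesis using True by linarith
    qed
    finally show ?thesis by (intro disjI2 exI[of _ "{a}"]) simp
  next
    case False
    have cont: "continuous_on {a..t'} (\<lambda>b. mass V wt f a b)"
      unfolding mass_def tent_def by (intro continuous_intros)
    have taa: "tent a a x = 0" for x unfolding tent_def by (auto simp: max_def min_def)
    have ma: "mass V wt f a a = 0" unfolding mass_def by (simp add: taa)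
    obtain t1 where t1: "a \<le> t1" "t1 \<le> t'" "mass V wt f a t1 = \<mu>"
      using IVT'[of "\<lambda>b. mass V wt f a b" a \<mu> t', OF _ _ at' cont] ma mu False by auto
    have at1: "a < t1" using t1 ma mu by (metis order.order_iff_strict less_irrefl)
    have "t1 \<ge> 0" using at1 Suc.prems by simp
    from Suc.IH[OF this] show ?thesis
    proof
      assume "\<exists>t::nat\<Rightarrow>real. t 0 = t1 \<and> (\<forall>i<n. t i < t (Suc i) \<and> mass V wt f (t i) (t (Suc i)) = \<mu>)"
      then obtain t where t: "t 0 = t1" "\<forall>i<n. t i < t (Suc i) \<and> mass V wt f (t i) (t (Suc i)) = \<mu>" by blast
      define t2 where "t2 = (\<lambda>i. case i of 0 \<Rightarrow> a | Suc j \<Rightarrow> t j)"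
      have "\<forall>i<Suc n. t2 i < t2 (Suc i) \<and> mass V wt f (t2 i) (t2 (Suc i)) = \<mu>"
      proof (intro allI impI)
        fix i assume "i < Suc n"
        then show "t2 i < t2 (Suc i) \<and> mass V wt f (t2 i) (t2 (Suc i)) = \<mu>"
          using t at1 t1 unfolding t2_def by (cases i) auto
      qed
      then show ?thesis by (intro disjI1 exI[of _ t2]) (simp add: t2_def)
    next
      assume "\<exists>T. finite T \<and> t1 \<in> T \<and> card T \<le> n \<and> (\<forall>x\<in>T. x \<ge> t1) \<and>
            (\<Sum>v\<in>V. deg V wt v * (if \<bar>f v\<bar> \<ge> t1 then (infdist \<bar>f v\<bar> T)\<^sup>2 else 0)) \<le> n * \<mu>"
      then obtain T' where T': "finite T'" "t1 \<in> T'" "card T' \<le> n" "\<forall>x\<in>T'. x \<ge> t1"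
        "(\<Sum>v\<in>V. deg V wt v * (if \<bar>f v\<bar> \<ge> t1 then (infdist \<bar>f v\<bar> T')\<^sup>2 else 0)) \<le> n * \<mu>" by blast
      define T where "T = insert a T'"
      have pw: "(if \<bar>f v\<bar> \<ge> a then (infdist \<bar>f v\<bar> T)\<^sup>2 else 0)
          \<le> (tent a t1 \<bar>f v\<bar>)\<^sup>2 + (if \<bar>f v\<bar> \<ge> t1 then (infdist \<bar>f v\<bar> T')\<^sup>2 else 0)" for v
      proof -
        consider "\<bar>f v\<bar> < a" | "a \<le> \<bar>f v\<bar>" "\<bar>f v\<bar> < t1" | "t1 \<le> \<bar>f v\<bar>" by linarith
        then show ?thesis
        proof cases
          case 1 then show ?thesis by simp
        next
          case 2
          have "infdist \<bar>f v\<bar> T \<le> \<bar>f v\<bar> - a" using infdist_le[of a T "\<bar>f v\<bar>"] 2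
            unfolding T_def by (simp add: dist_real_def)
          moreover have "infdist \<bar>f v\<bar> T \<le> t1 - \<bar>f v\<bar>" using infdist_le[of t1 T "\<bar>f v\<bar>"] 2 T'(2)
            unfolding T_def by (simp add: dist_real_def)
          ultimately have "infdist \<bar>f v\<bar> T \<le> tent a t1 \<bar>f v\<bar>" unfolding tent_def
            by (simp add: le_max_iff_disj)
          then have "(infdist \<bar>f v\<bar> T)\<^sup>2 \<le> (tent a t1 \<bar>f v\<bar>)\<^sup>2"
            by (intro power_mono infdist_nonneg)
          then show ?thesis using 2 by simp
        next
          case 3
          have "infdist \<bar>f v\<bar> T \<le> infdist \<bar>f v\<bar> T'"
            by (rule infdist_mono) (use T'(2) in \<open>auto simp: T_def\<close>)
          then have "(infdist \<bar>f v\<bar> T)\<^sup>2 \<le> (infdist \<bar>f v\<bar> T')\<^sup>2"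
            by (intro power_mono infdist_nonneg)
          then show ?thesis using 3 at1 by (simp add: add_increasing)
        qed
      qed
      have "(\<Sum>v\<in>V. deg V wt v * (if \<bar>f v\<bar> \<ge> a then (infdist \<bar>f v\<bar> T)\<^sup>2 else 0))
          \<le> (\<Sum>v\<in>V. deg V wt v * (tent a t1 \<bar>f v\<bar>)\<^sup>2 + deg V wt v * (if \<bar>f v\<bar> \<ge> t1 then (infdist \<bar>f v\<bar> T')\<^sup>2 else 0))"
      proof (rule sum_mono)
        fix v assume v: "v \<in> V"
        have "deg V wt v * (if \<bar>f v\<bar> \<ge> a then (infdist \<bar>f v\<bar> T)\<^sup>2 else 0)
           \<le> deg V wt v * ((tent a t1 \<bar>f v\<bar>)\<^sup>2 + (if \<bar>f v\<bar> \<ge> t1 then (infdist \<bar>f v\<bar> T')\<^sup>2 else 0))"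
          using pw[of v] degnn[OF v] by (rule mult_left_mono)
        then show "deg V wt v * (if \<bar>f v\<bar> \<ge> a then (infdist \<bar>f v\<bar> T)\<^sup>2 else 0)
           \<le> deg V wt v * (tent a t1 \<bar>f v\<bar>)\<^sup>2 + deg V wt v * (if \<bar>f v\<bar> \<ge> t1 then (infdist \<bar>f v\<bar> T')\<^sup>2 else 0)"
          by (simp only: distrib_left)
      qed
      also have "\<dots> = mass V wt f a t1 + (\<Sum>v\<in>V. deg V wt v * (if \<bar>f v\<bar> \<ge> t1 then (infdist \<bar>f v\<bar> T')\<^sup>2 else 0))"
        unfolding mass_def by (rule sum.distrib)
      also have "\<dots> \<le> Suc n * \<mu>" using t1(3) T'(5) by (simp add: algebra_simps)
      finally have S: "(\<Sum>v\<in>V. deg V wt v * (if \<bar>f v\<bar> \<ge> a then (infdist \<bar>f v\<bar> T)\<^sup>2 else 0)) \<le> Suc n * \<mu>" .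
      have "card T \<le> Suc (card T')" unfolding T_def using T'(1) by (simp add: card_insert_if)
      then have "card T \<le> Suc n" using T'(3) by simp
      moreover have "\<forall>x\<in>T. x \<ge> a" using T'(4) at1 unfolding T_def by force
      ultimately show ?thesis using S T'(1) by (intro disjI2 exI[of _ T]) (simp add: T_def)
    qed
  qed
qed


lemma inc_le:
  fixes t :: "nat \<Rightarrow> real"
  assumes inc: "\<forall>i<p. t i < t (Suc i)"
  shows "i < j \<Longrightarrow> j \<le> p \<Longrightarrow> t (Suc i) \<le> t j"
proof (induction j)
  case 0 then show ?case by simp
next
  case (Suc j)
  show ?case
  proof (cases "i = j")
    case True then show ?thesis by simp
  next
    case False
    then have "i < j" using Suc.prems by simp
    then have "t (Suc i) \<le> t j" using Suc.IH Suc.prems by simp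
    also have "t j \<le> t (Suc j)" using inc Suc.prems by (simp add: less_imp_le)
    finally show ?thesis .
  qed
qed

lemma inc_nonneg:
  fixes t :: "nat \<Rightarrow> real"
  assumes inc: "\<forall>i<p. t i < t (Suc i)" and t0: "t 0 = 0"
  shows "i \<le> p \<Longrightarrow> t i \<ge> 0"
proof (induction i)
  case 0 then show ?case using t0 by simp
next
  case (Suc i)
  then have "t i \<ge> 0" by simp
  moreover have "t i < t (Suc i)" using inc Suc.prems by simp
  ultimately show ?case by simp
qed

lemma tent_family:
  assumes G: "weighted_graph V wt" and D: "\<forall>v\<in>V. deg V wt v \<ge> 1"
    and N1: "wnorm2 V wt f = 1"
    and t0: "t 0 = 0" and inc: "\<forall>i<p. t i < t (Suc i)"
    and m: "\<forall>i<p. mass V wt f (t i) (t (Suc i)) = \<mu>" and mu: "\<mu> > 0"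
  defines "g \<equiv> \<lambda>i v. sgn (f v) * tent (t i) (t (Suc i)) \<bar>f v\<bar>"
  shows "\<forall>i<p. wnorm2 V wt (g i) = \<mu>"
    and "\<forall>i<p. supp V (g i) \<noteq> {}"
    and "\<forall>i<p. \<forall>j<p. i \<noteq> j \<longrightarrow> supp V (g i) \<inter> supp V (g j) = {}"
    and "(\<Sum>i<p. \<Sum>e\<in>edges V wt. ew wt e * (\<Sum>x\<in>e. g i x)\<^sup>2) \<le> Rplus V wt f"
proof -
  have tnn: "\<And>i. i \<le> p \<Longrightarrow> t i \<ge> 0" using inc_nonneg[OF inc t0] by blast
  have W: "wnorm2 V wt (g i) = \<mu>" if i: "i < p" for i
  proof -
    have "wnorm2 V wt (g i) = mass V wt f (t i) (t (Suc i))"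
      unfolding wnorm2_def mass_def
    proof (rule sum.cong[OF refl])
      fix v assume "v \<in> V"
      show "deg V wt v * (g i v)\<^sup>2 = deg V wt v * (tent (t i) (t (Suc i)) \<bar>f v\<bar>)\<^sup>2"
      proof (cases "f v = 0")
        case True
        then show ?thesis unfolding g_def using tent_zero[OF tnn[of i]] i by simp
      next
        case False
        then have "(sgn (f v))\<^sup>2 = 1" by (simp add: sgn_if)
        then show ?thesis unfolding g_def by (simp add: power_mult_distrib)
      qed
    qed
    then show ?thesis using m i by simp
  qed
  show "\<forall>i<p. wnorm2 V wt (g i) = \<mu>" using W by blast
  show "\<forall>i<p. supp V (g i) \<noteq> {}"
  proof (intro allI impI notI)
    fix i assume i: "i < p" and e: "supp V (g i) = {}"
    then have "\<forall>v\<in>V. g i v = 0" unfolding supp_def by blast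
    then have "wnorm2 V wt (g i) = 0" unfolding wnorm2_def by simp
    then show False using W[OF i] mu by simp
  qed
  have suppI: "t i < \<bar>f v\<bar> \<and> \<bar>f v\<bar> < t (Suc i)" if "g i v \<noteq> 0" for i v
  proof -
    have "tent (t i) (t (Suc i)) \<bar>f v\<bar> \<noteq> 0" using that unfolding g_def by auto
    then show ?thesis unfolding tent_def by (auto simp: max_def min_def split: if_splits)
  qed
  show "\<forall>i<p. \<forall>j<p. i \<noteq> j \<longrightarrow> supp V (g i) \<inter> supp V (g j) = {}"
  proof (intro allI impI)
    fix i j assume ij: "i < p" "j < p" "i \<noteq> j"
    show "supp V (g i) \<inter> supp V (g j) = {}"
    proof (rule ccontr)
      assume "supp V (g i) \<inter> supp V (g j) \<noteq> {}"
      then obtain v where "g i v \<noteq> 0" "g j v \<noteq> 0" unfolding supp_def by auto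
      then have a: "t i < \<bar>f v\<bar> \<and> \<bar>f v\<bar> < t (Suc i)" "t j < \<bar>f v\<bar> \<and> \<bar>f v\<bar> < t (Suc j)"
        using suppI by auto
      show False
      proof (cases "i < j")
        case True
        then have "t (Suc i) \<le> t j" using inc_le[OF inc, of i j] ij by simp
        then show False using a by simp
      next
        case False
        then have "j < i" using ij by simp
        then have "t (Suc j) \<le> t i" using inc_le[OF inc, of j i] ij by simp
        then show False using a by simp
      qed
    qed
  qed
  have mono: "\<forall>i<p. t i \<le> t (Suc i)" using inc by (simp add: less_imp_le)
  have "(\<Sum>i<p. \<Sum>e\<in>edges V wt. ew wt e * (\<Sum>x\<in>e. g i x)\<^sup>2)
      = (\<Sum>e\<in>edges V wt. ew wt e * (\<Sum>i<p. (\<Sum>x\<in>e. g i x)\<^sup>2))"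
    by (subst sum.swap) (simp add: sum_distrib_left)
  also have "\<dots> \<le> (\<Sum>e\<in>edges V wt. ew wt e * (\<Sum>x\<in>e. f x)\<^sup>2)"
  proof (rule sum_mono)
    fix e assume eE: "e \<in> edges V wt"
    obtain u v where uv: "e = {u,v}" "u \<noteq> v" using eE by (auto elim: edge_obtain)
    have "(\<Sum>i<p. (\<Sum>x\<in>e. g i x)\<^sup>2) = (\<Sum>i<p. \<bar>g i u + g i v\<bar>\<^sup>2)" using uv by simp
    also have "\<dots> \<le> (\<Sum>i<p. \<bar>g i u + g i v\<bar>)\<^sup>2" by (rule sum_sq_le_sq_sum) auto
    also have "\<dots> \<le> \<bar>f u + f v\<bar>\<^sup>2"
    proof (rule power_mono)
      show "(\<Sum>i<p. \<bar>g i u + g i v\<bar>) \<le> \<bar>f u + f v\<bar>"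
        unfolding g_def by (rule tent_edge[OF mono]) (use t0 in simp)
    qed (simp add: sum_nonneg)
    also have "\<dots> = (\<Sum>x\<in>e. f x)\<^sup>2" using uv by simp
    finally show "ew wt e * (\<Sum>i<p. (\<Sum>x\<in>e. g i x)\<^sup>2) \<le> ew wt e * (\<Sum>x\<in>e. f x)\<^sup>2"
      using ew_nonneg[OF G eE] by (rule mult_left_mono)
  qed
  also have "\<dots> = Rplus V wt f" by (rule Rplus_eq[OF N1, symmetric])
  finally show "(\<Sum>i<p. \<Sum>e\<in>edges V wt. ew wt e * (\<Sum>x\<in>e. g i x)\<^sup>2) \<le> Rplus V wt f" .
qed


lemma select:
  fixes Eg :: "nat \<Rightarrow> real"
  assumes nn: "\<forall>i<p. Eg i \<ge> 0" and S: "(\<Sum>i<p. Eg i) \<le> (real (p - k) + 1) * L"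
    and L: "L > 0" and kp: "k \<le> p"
  shows "card {i. i < p \<and> Eg i \<le> L} \<ge> k"
proof -
  define B where "B = {i. i < p \<and> Eg i > L}"
  define Gd where "Gd = {i. i < p \<and> Eg i \<le> L}"
  have finB: "finite B" unfolding B_def by simp
  have cB: "card B \<le> p - k"
  proof (rule ccontr)
    assume "\<not> card B \<le> p - k"
    then have cb: "card B \<ge> p - k + 1" by simp
    then have neB: "B \<noteq> {}" using finB by auto
    have "(real (p - k) + 1) * L \<le> real (card B) * L" using cb L by (intro mult_right_mono) auto
    also have "\<dots> = (\<Sum>i\<in>B. L)" by simp
    also have "\<dots> < (\<Sum>i\<in>B. Eg i)" by (rule sum_strict_mono[OF finB neB]) (auto simp: B_def)
    also have "\<dots> \<le> (\<Sum>i<p. Eg i)" by (rule sum_mono2) (use nn in \<open>auto simp: B_def\<close>)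
    finally show False using S by simp
  qed
  have "{..<p} = Gd \<union> B" "Gd \<inter> B = {}" unfolding Gd_def B_def by auto
  then have "p = card Gd + card B" using finB
    by (metis card_Un_disjoint card_lessThan finite_Un finite_lessThan)
  then show ?thesis using cB kp unfolding Gd_def by simp
qed


theorem mainTheorem13:
  fixes V :: "'a set" and wt :: "'a \<Rightarrow> 'a \<Rightarrow> real" and f :: "'a \<Rightarrow> real" and k :: nat
  assumes "weighted_graph V wt"
    and "\<forall>v\<in>V. deg V wt v \<ge> 1"
    and "wnorm2 V wt f = 1"
    and "k \<ge> 1"
  shows "beta V wt f \<le> 8 * real k * Rplus V wt f
     \<or> (beta V wt f > 0 \<and>
        (\<exists>F :: nat \<Rightarrow> 'a \<Rightarrow> real.
           (\<forall>i<k. supp V (F i) \<noteq> {}) \<and>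
           (\<forall>i<k. \<forall>j<k. i \<noteq> j \<longrightarrow> supp V (F i) \<inter> supp V (F j) = {}) \<and>
           (\<forall>i<k. Rplus V wt (F i) \<le> 256 * (real k)\<^sup>2 * (Rplus V wt f)\<^sup>2 / (beta V wt f)\<^sup>2)))"
proof -
  note G = assms(1) and D = assms(2) and N1 = assms(3) and k1 = assms(4)
  define \<beta> where "\<beta> = beta V wt f"
  define R where "R = Rplus V wt f"
  have R0: "R \<ge> 0" unfolding R_def Rplus_eq[OF N1]
    by (intro sum_nonneg mult_nonneg_nonneg ew_nonneg[OF G]) auto
  show ?thesis
  proof (cases "\<beta> \<le> 8 * real k * R")
    case True then show ?thesis unfolding \<beta>_def R_def by blast
  next
    case False
    then have bgt: "\<beta> > 8 * real k * R" by simp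
    then have bpos: "\<beta> > 0" using R0 by (smt (verit) mult_nonneg_nonneg of_nat_0_le_iff)
    have Rpos: "R > 0"
    proof (rule ccontr)
      assume "\<not> R > 0"
      then have R00: "R = 0" using R0 by simp
      have "\<beta> \<le> 2 * card {0::real} * (R + sqrt (2 * R * (\<Sum>v\<in>V. deg V wt v * (infdist \<bar>f v\<bar> {0::real})\<^sup>2)))"
        unfolding \<beta>_def R_def by (rule rounding[OF G D N1]) auto
      then show False using R00 bpos by simp
    qed
    define lam where "lam = 256 * (real k)\<^sup>2 * R\<^sup>2 / \<beta>\<^sup>2"
    define \<mu> where "\<mu> = R / ((real k + 1) * lam)"
    have kpos: "real k > 0" using k1 by simp
    have lpos: "lam > 0" unfolding lam_def using kpos Rpos bpos by simp
    have mpos: "\<mu> > 0" unfolding \<mu>_def using lpos Rpos kpos by simp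
    have Rlm: "R = (real (2*k - k) + 1) * (lam * \<mu>)"
    proof -
      have "real (2*k - k) = real k" by simp
      moreover have "(real k + 1) * lam \<noteq> 0" using lpos kpos by simp
      ultimately show ?thesis unfolding \<mu>_def by (simp add: field_simps)
    qed
    from tent_claim[OF G D mpos, of 0 "2*k" f, OF order_refl] show ?thesis
    proof
      assume "\<exists>t::nat\<Rightarrow>real. t 0 = 0 \<and> (\<forall>i<2*k. t i < t (Suc i) \<and> mass V wt f (t i) (t (Suc i)) = \<mu>)"
      then obtain t where t0: "t 0 = 0" and inc: "\<forall>i<2*k. t i < t (Suc i)"
        and m: "\<forall>i<2*k. mass V wt f (t i) (t (Suc i)) = \<mu>" by blast
      define g where "g = (\<lambda>i v. sgn (f v) * tent (t i) (t (Suc i)) \<bar>f v\<bar>)"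
      note TF = tent_family[OF G D N1 t0 inc m mpos]
      define Eg where "Eg = (\<lambda>i. \<Sum>e\<in>edges V wt. ew wt e * (\<Sum>x\<in>e. g i x)\<^sup>2)"
      have Egnn: "\<forall>i<2*k. Eg i \<ge> 0" unfolding Eg_def
        by (intro allI impI sum_nonneg mult_nonneg_nonneg ew_nonneg[OF G]) auto
      have "(\<Sum>i<2*k. Eg i) \<le> (real (2*k - k) + 1) * (lam * \<mu>)"
        using TF(4) Rlm unfolding Eg_def R_def g_def by simp
      then have cg: "card {i. i < 2*k \<and> Eg i \<le> lam * \<mu>} \<ge> k"
        by (rule select[OF Egnn]) (use lpos mpos in auto)
      obtain S where S: "S \<subseteq> {i. i < 2*k \<and> Eg i \<le> lam * \<mu>}" "card S = k" "finite S"
        using obtain_subset_with_card_n[OF cg] by blast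
      obtain h where h: "bij_betw h {0..<k} S" using ex_bij_betw_nat_finite[OF S(3)] S(2) by auto
      have hS: "h j \<in> S" if "j < k" for j using h that unfolding bij_betw_def by auto
      have hinj: "h i \<noteq> h j" if "i < k" "j < k" "i \<noteq> j" for i j
        using h that unfolding bij_betw_def inj_on_def by auto
      define F where "F = (\<lambda>j. g (h j))"
      have P1: "\<forall>i<k. supp V (F i) \<noteq> {}" using TF(2) hS S(1) unfolding F_def g_def by blast
      have P2: "\<forall>i<k. \<forall>j<k. i \<noteq> j \<longrightarrow> supp V (F i) \<inter> supp V (F j) = {}"
        using TF(3) hS S(1) hinj unfolding F_def g_def by blast
      have P3: "\<forall>i<k. Rplus V wt (F i) \<le> lam"
      proof (intro allI impI)
        fix j assume j: "j < k"
        have hj: "h j < 2*k" "Eg (h j) \<le> lam * \<mu>" using hS[OF j] S(1) by auto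
        have "Rplus V wt (F j) = Eg (h j) / \<mu>"
          unfolding Rplus_def F_def Eg_def using TF(1) hj(1) unfolding g_def by simp
        also have "\<dots> \<le> lam" using hj(2) mpos by (simp add: divide_le_eq)
        finally show "Rplus V wt (F j) \<le> lam" .
      qed
      show ?thesis
        by (intro disjI2 conjI exI[of _ F]) (use P1 P2 P3 bpos in \<open>auto simp: lam_def \<beta>_def R_def\<close>)
    next
      assume "\<exists>T. finite T \<and> 0 \<in> T \<and> card T \<le> 2*k \<and> (\<forall>x\<in>T. x \<ge> 0) \<and>
            (\<Sum>v\<in>V. deg V wt v * (if \<bar>f v\<bar> \<ge> 0 then (infdist \<bar>f v\<bar> T)\<^sup>2 else 0)) \<le> real (2*k) * \<mu>"
      then obtain T where T: "finite T" "0 \<in> T" "card T \<le> 2*k"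
        and dl: "(\<Sum>v\<in>V. deg V wt v * (infdist \<bar>f v\<bar> T)\<^sup>2) \<le> real (2*k) * \<mu>" by auto
      define \<delta> where "\<delta> = (\<Sum>v\<in>V. deg V wt v * (infdist \<bar>f v\<bar> T)\<^sup>2)"
      have rb: "\<beta> \<le> 2 * card T * (R + sqrt (2 * R * \<delta>))"
        unfolding \<beta>_def R_def \<delta>_def by (rule rounding[OF G D N1 T(1) T(2)])
      have s1: "sqrt (2 * R * \<delta>) \<le> sqrt (4 * real k * R * \<mu>)"
      proof -
        have "2 * R * \<delta> \<le> 2 * R * (real (2*k) * \<mu>)" using dl R0 unfolding \<delta>_def
          by (intro mult_left_mono) auto
        then show ?thesis by (simp add: mult.assoc mult.left_commute)
      qed
      have Rmu: "R * \<mu> = \<beta>\<^sup>2 / (256 * (real k)\<^sup>2 * (real k + 1))"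
      proof -
        define A where "A = 256 * (real k)\<^sup>2 * (real k + 1)"
        have A: "A > 0" unfolding A_def using kpos by simp
        have e: "(real k + 1) * (256 * (real k)\<^sup>2 * R\<^sup>2 / \<beta>\<^sup>2) = A * R\<^sup>2 / \<beta>\<^sup>2"
          unfolding A_def by (simp add: algebra_simps)
        have "R * \<mu> = R * R / (A * R\<^sup>2 / \<beta>\<^sup>2)" unfolding \<mu>_def lam_def e by simp
        also have "\<dots> = \<beta>\<^sup>2 / A" using Rpos bpos A by (simp add: power2_eq_square field_simps)
        finally show ?thesis unfolding A_def .
      qed
      have "4 * real k * sqrt (4 * real k * R * \<mu>) = sqrt (64 * (real k)^3 * (R * \<mu>))"
      proof -
        have "4 * real k = sqrt ((4 * real k)\<^sup>2)" using kpos by (simp only: real_sqrt_abs)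
        then have "4 * real k * sqrt (4 * real k * R * \<mu>) = sqrt ((4 * real k)\<^sup>2 * (4 * real k * R * \<mu>))"
          by (metis real_sqrt_mult)
        also have "(4 * real k)\<^sup>2 * (4 * real k * R * \<mu>) = 64 * (real k)^3 * (R * \<mu>)"
          by (simp add: power2_eq_square power3_eq_cube)
        finally show ?thesis .
      qed
      also have "\<dots> \<le> sqrt ((\<beta> / 2)\<^sup>2)"
      proof -
        have "64 * (real k)^3 * (R * \<mu>) = \<beta>\<^sup>2 / 4 * (real k / (real k + 1))"
        proof -
          let ?k = "real k"
          have "64 * ?k^3 * (\<beta>\<^sup>2 / (256 * ?k\<^sup>2 * (?k + 1))) = (?k\<^sup>2 * (64 * ?k * \<beta>\<^sup>2)) / (?k\<^sup>2 * (256 * (?k + 1)))"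
            by (simp add: power2_eq_square power3_eq_cube algebra_simps)
          also have "\<dots> = (64 * ?k * \<beta>\<^sup>2) / (256 * (?k + 1))" using kpos by (intro mult_divide_mult_cancel_left) simp
          also have "\<dots> = \<beta>\<^sup>2 / 4 * (?k / (?k + 1))" using kpos by (simp add: field_simps)
          finally show ?thesis unfolding Rmu .
        qed
        also have "\<dots> \<le> \<beta>\<^sup>2 / 4 * 1" using kpos by (intro mult_left_mono) auto
        also have "\<dots> = (\<beta> / 2)\<^sup>2" by (simp add: power2_eq_square)
        finally show ?thesis by (rule real_sqrt_le_mono)
      qed
      also have "\<dots> = \<beta> / 2" using bpos by simp
      finally have s2: "4 * real k * sqrt (4 * real k * R * \<mu>) \<le> \<beta> / 2" .
      have "\<beta> \<le> 2 * card T * (R + sqrt (4 * real k * R * \<mu>))"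
        using rb s1 R0 by (smt (verit) mult_left_mono of_nat_0_le_iff)
      also have "\<dots> \<le> 4 * real k * (R + sqrt (4 * real k * R * \<mu>))"
        by (rule mult_right_mono) (use T(3) R0 mpos kpos in auto)
      also have "\<dots> = 4 * real k * R + 4 * real k * sqrt (4 * real k * R * \<mu>)" by (simp add: algebra_simps)
      finally have "\<beta> \<le> 4 * real k * R + \<beta> / 2" using s2 by linarith
      then show ?thesis using bgt by linarith
    qed
  qed
qed


end
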